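(* Let $T_i,T_j$ be indecomposable summands of a maximal rigid object $T$ of $\mathcal{C}_n$. Then either $T_i\in\mathcal{W}_{T_j}$, or $T_j\in\mathcal{W}_{T_i}$, or $\mathcal{W}_{T_i}\cap\mathcal{W}_{T_j}=\emptyset$.
   Context: Let $k$ be algebraically closed, $n\ge2$, $\mathcal{T}_n$ the tube of rank $n$ (finite-dimensional nilpotent representations of the cyclically oriented $\tilde A_{n-1}$-quiver; AR-translation $\tau$), $\mathcal{C}_n=D^b(\mathcal{T}_n)/\tau^{-1}[1]$ the cluster tube, with indecomposables identified with those of $\mathcal{T}_n$. Indecomposables have coordinates $(a,b)$, $a\in\mathbb{Z}/n$, $b\ge1$ the quasilength, with $\tau(a,b)=(a-1,b)$ and irreducible maps $(a,b)\to(a,b+1)$ and $(a,b)\to(a+1,b-1)$. For $X=(a,i)$, $i\le n-1$, the wing $\mathcal{W}_X$ is $\{(a+s,i'):s\ge0,i'\ge1,s+i'\le i\}$. $T$ is maximal rigid if $\operatorname{Ext}^1_{\mathcal{C}_n}(T,T)=0$ and $\operatorname{Ext}^1(T\oplus X,T\oplus X)=0$ implies $X\in\operatorname{add}T$; all indecomposable summands of a maximal rigid object have quasilength at most $n-1$. *)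

theory Defs
  imports Main
begin

text \<open>An indecomposable is a pair (a, b) with a the quasi-socle position in {0..<n}
  (representing Z/n) and b >= 1 the quasilength.  The uniserial module (a,b) has
  composition factors S_a (socle), S_(a+1), ..., S_(a+b-1) (top), indices mod n.
  Thus (a,b) -> (a,b+1) is the irreducible mono, (a,b) -> (a+1,b-1) the irreducible
  epi, and tau (a,b) = (a-1,b).\<close>

type_synonym tind = "nat \<times> nat"

definition ind :: "nat \<Rightarrow> tind set" where
  "ind n = {(a, b). a < n \<and> 1 \<le> b}"

definition tau :: "nat \<Rightarrow> tind \<Rightarrow> tind" where
  "tau n X = ((fst X + n - 1) mod n, snd X)"

text \<open>dim Hom_{T_n}((a,b),(c,d)): a nonzero map factors through an image of length k,
  which is the top part of (a,b) and the bottom part of (c,d).\<close>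
definition homdim :: "nat \<Rightarrow> tind \<Rightarrow> tind \<Rightarrow> nat" where
  "homdim n X Y = card {k. 1 \<le> k \<and> k \<le> min (snd X) (snd Y)
      \<and> (fst X + snd X - k) mod n = fst Y mod n}"

text \<open>dim Ext^1_{C_n}(X,Y) = dim Ext^1_T(X,Y) + dim Ext^1_T(Y,X)
   = dim Hom_T(Y, tau X) + dim Hom_T(X, tau Y)  (Auslander-Reiten formula).\<close>
definition extdim_C :: "nat \<Rightarrow> tind \<Rightarrow> tind \<Rightarrow> nat" where
  "extdim_C n X Y = homdim n Y (tau n X) + homdim n X (tau n Y)"

text \<open>An object of C_n is a finite direct sum of indecomposables; up to multiplicities
  (irrelevant for Ext-vanishing and add) it is given by its finite set of
  indecomposable summands.\<close>
definition rigid :: "nat \<Rightarrow> tind set \<Rightarrow> bool" where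
  "rigid n T \<longleftrightarrow> (\<forall>X\<in>T. \<forall>Y\<in>T. extdim_C n X Y = 0)"

definition maximal_rigid :: "nat \<Rightarrow> tind set \<Rightarrow> bool" where
  "maximal_rigid n T \<longleftrightarrow> finite T \<and> T \<subseteq> ind n \<and> rigid n T \<and>
     (\<forall>X. finite X \<and> X \<subseteq> ind n \<and> rigid n (T \<union> X) \<longrightarrow> X \<subseteq> T)"

definition wing :: "nat \<Rightarrow> tind \<Rightarrow> tind set" where
  "wing n X = {((fst X + s) mod n, i') | s i'. 1 \<le> i' \<and> s + i' \<le> snd X}"

end

theory Submission
  imports Defs
begin

lemma mod2: "(x::nat) < 2*n \<Longrightarrow> x mod n = (if x < n then x else x - n)"
  by (simp add: le_mod_geq)

lemma hom_pos:
  assumes "k \<in> {k. 1 \<le> k \<and> k \<le> min (snd X) (snd Y)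
      \<and> (fst X + snd X - k) mod n = fst Y mod n}"
  shows "homdim n X Y \<noteq> 0"
proof -
  have "finite {k. 1 \<le> k \<and> k \<le> min (snd X) (snd Y)
      \<and> (fst X + snd X - k) mod n = fst Y mod n}" by (rule finite_subset[of _ "{..min (snd X) (snd Y)}"]) auto
  thus ?thesis using assms unfolding homdim_def by (metis card_0_eq empty_iff)
qed

lemma small:
  assumes "2 \<le> n" "a < n" "rigid n T" "(a,b) \<in> T"
  shows "b \<le> n - 1"
proof (rule ccontr)
  assume "\<not> b \<le> n - 1"
  hence "homdim n (a,b) (tau n (a,b)) \<noteq> 0"
    apply (intro hom_pos[where k="b+1-n"])
    using assms by (auto simp add: tau_def)
  thus False using assms unfolding rigid_def extdim_C_def by fastforce
qed

lemma key:
  assumes "2 \<le> n" "a < n" "c < n" "b \<le> n - 1" "d \<le> n - 1"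
    "r = (c + n - a) mod n" "1 \<le> r" "r + 1 \<le> b" "b + 1 \<le> r + d"
  shows "homdim n (a,b) (tau n (c,d)) \<noteq> 0"
proof -
  have r: "r = (if c \<ge> a then c - a else c + n - a)"
    using assms(2,3,6) mod2[of "c+n-a" n] by auto
  have e: "(a + b - (b - r + 1)) mod n = ((c + n - 1) mod n) mod n"
  proof (cases "c \<ge> a")
    case True
    have c1: "c \<ge> 1" using True r assms by simp
    have l: "a + b - (b - r + 1) = c - 1" using True r assms by simp
    have "(c + n - 1) mod n = c - 1" using c1 assms mod2[of "c+n-1" n] by simp
    moreover have "(c - 1) mod n = c - 1" using assms by simp
    ultimately show ?thesis using l by simp
  next
    case False
    then show ?thesis using r assms mod2[of "c+n-1" n] mod2[of "a+r-1" n] by auto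
  qed
  show ?thesis
    apply (intro hom_pos[where k="b - r + 1"])
    using assms(7,8,9) e by (auto simp add: tau_def)
qed

lemma inwing:
  assumes "a < n" "c < n" "r = (c + n - a) mod n" "1 \<le> d" "r + d \<le> b"
  shows "(c,d) \<in> wing n (a,b)"
proof -
  have "(a + r) mod n = c"
    using assms mod2[of "c+n-a" n] mod2[of "a + (c+n-a) mod n" n] by (auto split: if_splits)
  thus ?thesis unfolding wing_def using assms by force
qed

theorem lemma2p6:
  fixes n :: nat and T :: "tind set" and Ti Tj :: tind
  assumes "2 \<le> n" and "maximal_rigid n T" and "Ti \<in> T" and "Tj \<in> T"
  shows "Ti \<in> wing n Tj \<or> Tj \<in> wing n Ti \<or> wing n Ti \<inter> wing n Tj = {}"
proof (rule ccontr)
  assume H: "\<not> ?thesis"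
  obtain a b where Ti: "Ti = (a,b)" by fastforce
  obtain c d where Tj: "Tj = (c,d)" by fastforce
  have R: "rigid n T" and I: "T \<subseteq> ind n" using assms(2) maximal_rigid_def by auto
  have ab: "a < n" "1 \<le> b" using I assms(3) Ti ind_def by auto
  have cd: "c < n" "1 \<le> d" using I assms(4) Tj ind_def by auto
  have bn: "b \<le> n - 1" using small assms(1) ab R assms(3) Ti by blast
  have dn: "d \<le> n - 1" using small assms(1) cd R assms(4) Tj by blast
  have e1: "homdim n (a,b) (tau n (c,d)) = 0" "homdim n (c,d) (tau n (a,b)) = 0"
    using R assms(3,4) Ti Tj unfolding rigid_def extdim_C_def by fastforce+
  define r where "r = (c + n - a) mod n"
  define r' where "r' = (a + n - c) mod n"
  have r: "r = (if c \<ge> a then c - a else c + n - a)"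
    using ab cd r_def mod2[of "c+n-a" n] by auto
  have r': "r' = (if a \<ge> c then a - c else a + n - c)"
    using ab cd r'_def mod2[of "a+n-c" n] by auto
  obtain x where "x \<in> wing n Ti" "x \<in> wing n Tj" using H by blast
  then obtain s t i where st: "(a+s) mod n = (c+t) mod n" "1 \<le> i" "s + i \<le> b" "t + i \<le> d"
    unfolding wing_def Ti Tj by auto
  have st2: "(if a + s < n then a + s else a + s - n) = (if c + t < n then c + t else c + t - n)"
    using st mod2[of "a+s" n] mod2[of "c+t" n] ab cd bn dn by auto
  have nw1: "\<not> r + d \<le> b" using inwing[OF ab(1) cd(1) r_def cd(2)] H Ti Tj by blast
  have nw2: "\<not> r' + b \<le> d" using inwing[OF cd(1) ab(1) r'_def ab(2)] H Ti Tj by blast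
  show False
  proof (cases "r = 0")
    case True
    then show ?thesis using r r' nw1 nw2 ab cd by (auto split: if_splits)
  next
    case False
    show ?thesis
    proof (cases "r + 1 \<le> b")
      case True
      then show ?thesis using key[OF assms(1) ab(1) cd(1) bn dn r_def] False nw1 e1 by auto
    next
      case False2: False
      have "1 \<le> r'" "r' + 1 \<le> d" using r r' False False2 st2 st ab cd bn dn by (auto split: if_splits)
      then show ?thesis using key[OF assms(1) cd(1) ab(1) dn bn r'_def] nw2 e1 by auto
    qed
  qed
qed

end
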